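(* Let $\mathcal{S}=\{1,\dots,S\}$, $T>0$, and let $R_t$ be the rate matrix of a forward CTMC with $X_0\sim p_{\text{data}}$, conditionals $q_{t|0}(\cdot\mid x_0)$ and marginals $q_t$; let $\hat\lambda_t,\hat r_t$ be the true reverse exit rates and jump distributions and $\lambda^\theta_t,r^\theta_t$ the model exit rates and jump distributions. For $x_0\in\mathcal{S}$ define \[ \hat\lambda_{t|0}(i\mid x_0):=\sum_{j\neq i}R_t(j,i)\frac{q_{t|0}(j\mid x_0)}{q_{t|0}(i\mid x_0)},\qquad \hat r_{t|0}(j\mid i,x_0):=\frac{R_t(j,i)\frac{q_{t|0}(j\mid x_0)}{q_{t|0}(i\mid x_0)}}{\hat\lambda_{t|0}(i\mid x_0)}. \] Let $\mathcal{L}(\theta):=\mathbb{E}_{t\sim\mathcal{U}(0,T),\,x_t\sim q_t}\bigl[\mathrm{KL}^{\text{Poi}}(\hat\lambda_t(x_t)\|\lambda^\theta_t(x_t))+\hat\lambda_t(x_t)\,\mathrm{CE}(\hat r_t(\cdot\mid x_t),r^\theta_t(\cdot\mid x_t))\bigr]$. Then \[ \mathcal{L}(\theta)=\mathbb{E}_{t\sim\mathcal{U}(0,T),\,x_0\sim p_{\text{data}},\,x_t\sim q_{t|0}(\cdot\mid x_0)}\Bigl[-\sum_{j\neq x_t}R_t(j,x_t)\frac{q_{t|0}(j\mid x_0)}{q_{t|0}(x_t\mid x_0)}\log\bigl(\lambda^\theta_t(x_t)r^\theta_t(j\mid x_t)\bigr)-\hat\lambda_{t|0}(x_t\mid x_0)+\lambda^\theta_t(x_t)\Bigr]+\mathrm{const},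 \] where the constant does not depend on $\theta$.
   Context: A rate matrix $R_t$ satisfies $R_t(i,j)\ge0$ ($i\ne j$), $\sum_jR_t(i,j)=0$. $q_{t|0}(i\mid x_0)=\mathbb{P}(X_t=i\mid X_0=x_0)$, $q_t(i)=\sum_{x_0}p_{\text{data}}(x_0)q_{t|0}(i\mid x_0)$. True reverse rates $\hat R_t(i,j)=R_t(j,i)q_t(j)/q_t(i)$, $\hat\lambda_t(i)=\sum_{j\ne i}\hat R_t(i,j)$, $\hat r_t(j\mid i)=\hat R_t(i,j)/\hat\lambda_t(i)$. Model: $\lambda^\theta_t(i)>0$, $r^\theta_t(\cdot\mid i)$ a probability distribution on $\mathcal{S}\setminus\{i\}$. $\mathrm{KL}^{\text{Poi}}(\lambda\|\lambda')=\lambda\log\frac{\lambda}{\lambda'}-\lambda+\lambda'$, $\mathrm{CE}(\hat r,r)=-\sum_{j\ne i}\hat r(j\mid i)\log r(j\mid i)$. All ratios and logarithms are assumed well defined (e.g. conditional probabilities positive). *)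

theory Defs
  imports "HOL-Analysis.Analysis"
begin

text \<open>State space: a finite type 's (standing for {1,...,S}).
  Time-dependent quantities are functions of t :: real.
  R t i j = R_t(i,j); qc t x0 i = q_{t|0}(i | x0); p = p_data.\<close>

definition rate_matrix :: "('s::finite \<Rightarrow> 's \<Rightarrow> real) \<Rightarrow> bool" where
  "rate_matrix R \<longleftrightarrow> (\<forall>i j. i \<noteq> j \<longrightarrow> R i j \<ge> 0) \<and> (\<forall>i. (\<Sum>j\<in>UNIV. R i j) = 0)"

definition qmarg :: "('s::finite \<Rightarrow> real) \<Rightarrow> ('s \<Rightarrow> 's \<Rightarrow> real) \<Rightarrow> 's \<Rightarrow> real" where
  "qmarg p qc0 i = (\<Sum>x0\<in>UNIV. p x0 * qc0 x0 i)"

definition rev_rate :: "('s \<Rightarrow> 's \<Rightarrow> real) \<Rightarrow> ('s \<Rightarrow> real) \<Rightarrow> 's \<Rightarrow> 's \<Rightarrow> real" where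
  "rev_rate R q i j = R j i * q j / q i"

definition rev_exit :: "('s::finite \<Rightarrow> 's \<Rightarrow> real) \<Rightarrow> ('s \<Rightarrow> real) \<Rightarrow> 's \<Rightarrow> real" where
  "rev_exit R q i = (\<Sum>j\<in>UNIV - {i}. rev_rate R q i j)"

definition rev_jump :: "('s::finite \<Rightarrow> 's \<Rightarrow> real) \<Rightarrow> ('s \<Rightarrow> real) \<Rightarrow> 's \<Rightarrow> 's \<Rightarrow> real" where
  "rev_jump R q i j = rev_rate R q i j / rev_exit R q i"

definition cond_exit :: "('s::finite \<Rightarrow> 's \<Rightarrow> real) \<Rightarrow> ('s \<Rightarrow> real) \<Rightarrow> 's \<Rightarrow> real" where
  "cond_exit R qc i = (\<Sum>j\<in>UNIV - {i}. R j i * qc j / qc i)"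

definition KL_poi :: "real \<Rightarrow> real \<Rightarrow> real" where
  "KL_poi l l' = l * ln (l / l') - l + l'"

definition CE :: "'s::finite \<Rightarrow> ('s \<Rightarrow> real) \<Rightarrow> ('s \<Rightarrow> real) \<Rightarrow> real" where
  "CE i rh r = - (\<Sum>j\<in>UNIV - {i}. rh j * ln (r j))"

text \<open>Loss integrand (expectation over x_t ~ q_t at fixed t).
  lam t i = lambda^theta_t(i), rth t i j = r^theta_t(j | i).\<close>
definition loss_integrand ::
  "(real \<Rightarrow> 's::finite \<Rightarrow> 's \<Rightarrow> real) \<Rightarrow> ('s \<Rightarrow> real) \<Rightarrow> (real \<Rightarrow> 's \<Rightarrow> 's \<Rightarrow> real)
   \<Rightarrow> (real \<Rightarrow> 's \<Rightarrow> real) \<Rightarrow> (real \<Rightarrow> 's \<Rightarrow> 's \<Rightarrow> real) \<Rightarrow> real \<Rightarrow> real" where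
  "loss_integrand R p qc lam rth t =
     (let q = qmarg p (qc t) in
      (\<Sum>i\<in>UNIV. q i *
         (KL_poi (rev_exit (R t) q i) (lam t i)
          + rev_exit (R t) q i * CE i (rev_jump (R t) q i) (rth t i))))"

definition denoise_integrand ::
  "(real \<Rightarrow> 's::finite \<Rightarrow> 's \<Rightarrow> real) \<Rightarrow> ('s \<Rightarrow> real) \<Rightarrow> (real \<Rightarrow> 's \<Rightarrow> 's \<Rightarrow> real)
   \<Rightarrow> (real \<Rightarrow> 's \<Rightarrow> real) \<Rightarrow> (real \<Rightarrow> 's \<Rightarrow> 's \<Rightarrow> real) \<Rightarrow> real \<Rightarrow> real" where
  "denoise_integrand R p qc lam rth t =
     (\<Sum>x0\<in>UNIV. p x0 * (\<Sum>i\<in>UNIV. qc t x0 i *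
        ( - (\<Sum>j\<in>UNIV - {i}. R t j i * (qc t x0 j / qc t x0 i) * ln (lam t i * rth t i j))
          - cond_exit (R t) (qc t x0) i + lam t i)))"

definition unif_exp :: "real \<Rightarrow> (real \<Rightarrow> real) \<Rightarrow> real" where
  "unif_exp T f = (\<integral>t\<in>{0<..<T}. f t \<partial>lborel) / T"

end

theory Submission
  imports Defs
begin

lemma pointwise:
  fixes R :: "'s::finite \<Rightarrow> 's \<Rightarrow> real" and p :: "'s \<Rightarrow> real"
    and qc :: "'s \<Rightarrow> 's \<Rightarrow> real" and lam :: "'s \<Rightarrow> real" and rth :: "'s \<Rightarrow> 's \<Rightarrow> real"
  assumes Rnn: "\<And>i j. i \<noteq> j \<Longrightarrow> R i j \<ge> 0"
    and p_nonneg: "\<And>x. p x \<ge> 0"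
    and p_sum: "(\<Sum>x\<in>UNIV. p x) = 1"
    and qpos: "\<And>x0 i. qc x0 i > 0"
    and cepos: "\<And>x0 i. cond_exit R (qc x0) i > 0"
    and lpos: "\<And>i. lam i > 0"
    and rpos: "\<And>i j. j \<noteq> i \<Longrightarrow> rth i j > 0"
  shows "(let q = qmarg p qc in
      (\<Sum>i\<in>UNIV. q i * (KL_poi (rev_exit R q i) (lam i) + rev_exit R q i * CE i (rev_jump R q i) (rth i))))
    = (\<Sum>x0\<in>UNIV. p x0 * (\<Sum>i\<in>UNIV. qc x0 i *
        ( - (\<Sum>j\<in>UNIV - {i}. R j i * (qc x0 j / qc x0 i) * ln (lam i * rth i j))
          - cond_exit R (qc x0) i + lam i)))
    + ((let q = qmarg p qc in (\<Sum>i\<in>UNIV. q i * (rev_exit R q i * ln (rev_exit R q i) - rev_exit R q i)))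
       + (\<Sum>x0\<in>UNIV. p x0 * (\<Sum>i\<in>UNIV. qc x0 i * cond_exit R (qc x0) i)))"
proof -
  define q where "q = qmarg p qc"
  define A where "A i = (\<Sum>j\<in>UNIV - {i}. R j i * q j * ln (lam i * rth i j))" for i
  have qnz: "qc x0 i \<noteq> 0" for x0 i using qpos[of x0 i] by simp
  have ex: "\<exists>x. p x > 0"
  proof (rule ccontr)
    assume "\<not> ?thesis"
    then have "\<forall>x. p x = 0" by (metis p_nonneg antisym not_less)
    then show False using p_sum by simp
  qed
  have qp: "q i > 0" for i
  proof -
    obtain x where x: "p x > 0" using ex by blast
    have "p x * qc x i > 0" using x qpos by simp
    also have "p x * qc x i \<le> (\<Sum>x0\<in>UNIV. p x0 * qc x0 i)"
      by (rule member_le_sum) (auto intro: mult_nonneg_nonneg p_nonneg less_imp_le qpos)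
    finally show ?thesis unfolding q_def qmarg_def .
  qed
  have qe: "q i * rev_exit R q i = (\<Sum>j\<in>UNIV - {i}. R j i * q j)" for i
    unfolding rev_exit_def rev_rate_def sum_distrib_left using qp[of i]
    by (intro sum.cong) auto
  have qe2: "q i * rev_exit R q i = (\<Sum>x0\<in>UNIV. p x0 * (qc x0 i * cond_exit R (qc x0) i))" for i
  proof -
    have "(\<Sum>j\<in>UNIV - {i}. R j i * q j) = (\<Sum>j\<in>UNIV - {i}. \<Sum>x0\<in>UNIV. p x0 * (R j i * qc x0 j))"
      unfolding q_def qmarg_def sum_distrib_left by (intro sum.cong) (auto simp: algebra_simps)
    also have "\<dots> = (\<Sum>x0\<in>UNIV. p x0 * (\<Sum>j\<in>UNIV - {i}. R j i * qc x0 j))"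
      by (subst sum.swap) (simp add: sum_distrib_left)
    also have "\<dots> = (\<Sum>x0\<in>UNIV. p x0 * (qc x0 i * cond_exit R (qc x0) i))"
      unfolding cond_exit_def sum_distrib_left
      by (intro sum.cong refl) (simp add: qnz)
    finally show ?thesis using qe by simp
  qed
  have rep: "rev_exit R q i > 0" for i
  proof -
    obtain x where x: "p x > 0" using ex by blast
    have "p x * (qc x i * cond_exit R (qc x) i) > 0" using x qpos cepos by simp
    also have "\<dots> \<le> (\<Sum>x0\<in>UNIV. p x0 * (qc x0 i * cond_exit R (qc x0) i))"
      by (rule member_le_sum) (auto intro!: mult_nonneg_nonneg p_nonneg less_imp_le[OF qpos] less_imp_le[OF cepos])
    finally have "q i * rev_exit R q i > 0" using qe2 by simp
    then show ?thesis using qp[of i] by (simp add: zero_less_mult_iff)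
  qed
  have L: "q i * (KL_poi (rev_exit R q i) (lam i) + rev_exit R q i * CE i (rev_jump R q i) (rth i))
      = q i * (rev_exit R q i * ln (rev_exit R q i) - rev_exit R q i) + (q i * lam i - A i)" for i
  proof -
    let ?e = "rev_exit R q i"
    have kl: "KL_poi ?e (lam i) = ?e * ln ?e - ?e * ln (lam i) - ?e + lam i"
      unfolding KL_poi_def using rep[of i] lpos[of i] by (simp add: ln_div algebra_simps)
    have ce: "q i * (?e * CE i (rev_jump R q i) (rth i)) = - (\<Sum>j\<in>UNIV - {i}. R j i * q j * ln (rth i j))"
    proof -
      have "q i * (?e * CE i (rev_jump R q i) (rth i))
          = (\<Sum>j\<in>UNIV - {i}. q i * (?e * (- (rev_jump R q i j * ln (rth i j)))))"
        unfolding CE_def by (simp add: sum_distrib_left sum_negf)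
      also have "\<dots> = (\<Sum>j\<in>UNIV - {i}. - (R j i * q j * ln (rth i j)))"
        unfolding rev_jump_def rev_rate_def using rep[of i] qp[of i]
        by (intro sum.cong refl) (simp add: field_simps)
      finally show ?thesis by (simp add: sum_negf)
    qed
    have la: "q i * (?e * ln (lam i)) = (\<Sum>j\<in>UNIV - {i}. R j i * q j * ln (lam i))"
      using qe[of i] by (simp add: sum_distrib_right mult.assoc[symmetric])
    have Ai: "A i = (\<Sum>j\<in>UNIV - {i}. R j i * q j * ln (lam i)) + (\<Sum>j\<in>UNIV - {i}. R j i * q j * ln (rth i j))"
      unfolding A_def sum.distrib[symmetric]
    proof (intro sum.cong refl)
      fix j assume "j \<in> UNIV - {i}"
      then have "rth i j > 0" using rpos by auto
      then show "R j i * q j * ln (lam i * rth i j) = R j i * q j * ln (lam i) + R j i * q j * ln (rth i j)"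
        using lpos[of i] by (simp add: ln_mult algebra_simps)
    qed
    have "q i * (KL_poi ?e (lam i) + ?e * CE i (rev_jump R q i) (rth i))
       = q i * (?e * ln ?e) - q i * (?e * ln (lam i)) - q i * ?e + q i * lam i
         + q i * (?e * CE i (rev_jump R q i) (rth i))"
      unfolding kl by (simp add: algebra_simps)
    also have "\<dots> = q i * (?e * ln ?e) - q i * ?e + q i * lam i
         - (\<Sum>j\<in>UNIV - {i}. R j i * q j * ln (lam i)) - (\<Sum>j\<in>UNIV - {i}. R j i * q j * ln (rth i j))"
      unfolding ce la by simp
    finally show ?thesis unfolding Ai by (simp add: algebra_simps)
  qed
  have D: "(\<Sum>x0\<in>UNIV. p x0 * (\<Sum>i\<in>UNIV. qc x0 i *
        ( - (\<Sum>j\<in>UNIV - {i}. R j i * (qc x0 j / qc x0 i) * ln (lam i * rth i j))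
          - cond_exit R (qc x0) i + lam i)))
     = (\<Sum>i\<in>UNIV. q i * lam i - A i) - (\<Sum>x0\<in>UNIV. p x0 * (\<Sum>i\<in>UNIV. qc x0 i * cond_exit R (qc x0) i))"
  proof -
    have "(\<Sum>x0\<in>UNIV. p x0 * (\<Sum>i\<in>UNIV. qc x0 i *
        ( - (\<Sum>j\<in>UNIV - {i}. R j i * (qc x0 j / qc x0 i) * ln (lam i * rth i j))
          - cond_exit R (qc x0) i + lam i)))
      = (\<Sum>x0\<in>UNIV. \<Sum>i\<in>UNIV. (p x0 * qc x0 i * lam i
          - (\<Sum>j\<in>UNIV - {i}. R j i * (p x0 * qc x0 j) * ln (lam i * rth i j)))
          - p x0 * (qc x0 i * cond_exit R (qc x0) i))"
      unfolding sum_distrib_left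
      by (intro sum.cong refl) (simp add: qnz algebra_simps sum_subtractf sum_distrib_left)
    also have "\<dots> = (\<Sum>x0\<in>UNIV. \<Sum>i\<in>UNIV. (p x0 * qc x0 i * lam i
          - (\<Sum>j\<in>UNIV - {i}. R j i * (p x0 * qc x0 j) * ln (lam i * rth i j))))
          - (\<Sum>x0\<in>UNIV. p x0 * (\<Sum>i\<in>UNIV. qc x0 i * cond_exit R (qc x0) i))"
      by (simp only: sum_subtractf sum_distrib_left)
    also have "(\<Sum>x0\<in>UNIV. \<Sum>i\<in>UNIV. (p x0 * qc x0 i * lam i
          - (\<Sum>j\<in>UNIV - {i}. R j i * (p x0 * qc x0 j) * ln (lam i * rth i j))))
        = (\<Sum>i\<in>UNIV. \<Sum>x0\<in>UNIV. (p x0 * qc x0 i * lam i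
          - (\<Sum>j\<in>UNIV - {i}. R j i * (p x0 * qc x0 j) * ln (lam i * rth i j))))"
      by (rule sum.swap)
    also have "(\<Sum>i\<in>UNIV. \<Sum>x0\<in>UNIV. (p x0 * qc x0 i * lam i
          - (\<Sum>j\<in>UNIV - {i}. R j i * (p x0 * qc x0 j) * ln (lam i * rth i j))))
        = (\<Sum>i\<in>UNIV. q i * lam i - A i)"
    proof (intro sum.cong refl)
      fix i
      have a: "(\<Sum>x0\<in>UNIV. p x0 * qc x0 i * lam i) = q i * lam i"
        unfolding q_def qmarg_def by (simp add: sum_distrib_right)
      have b: "(\<Sum>x0\<in>UNIV. \<Sum>j\<in>UNIV - {i}. R j i * (p x0 * qc x0 j) * ln (lam i * rth i j))
          = (\<Sum>j\<in>UNIV - {i}. \<Sum>x0\<in>UNIV. R j i * (p x0 * qc x0 j) * ln (lam i * rth i j))"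
        by (rule sum.swap)
      have c: "(\<Sum>x0\<in>UNIV. R j i * (p x0 * qc x0 j) * ln (lam i * rth i j))
          = R j i * q j * ln (lam i * rth i j)" for j
        unfolding q_def qmarg_def by (simp add: sum_distrib_left sum_distrib_right mult.assoc)
      show "(\<Sum>x0\<in>UNIV. (p x0 * qc x0 i * lam i
          - (\<Sum>j\<in>UNIV - {i}. R j i * (p x0 * qc x0 j) * ln (lam i * rth i j))))
          = q i * lam i - A i"
        unfolding sum_subtractf a b c A_def ..
    qed
    finally show ?thesis .
  qed
  show ?thesis
    unfolding q_def[symmetric] Let_def D L sum.distrib by simp
qed

theorem proposition4p6:
  fixes T :: real
    and R :: "real \<Rightarrow> 's::finite \<Rightarrow> 's \<Rightarrow> real"
    and p :: "'s \<Rightarrow> real"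
    and qc :: "real \<Rightarrow> 's \<Rightarrow> 's \<Rightarrow> real"
  assumes T_pos: "T > 0"
    and rate: "\<And>t. rate_matrix (R t)"
    and p_nonneg: "\<And>x. p x \<ge> 0"
    and p_sum: "(\<Sum>x\<in>UNIV. p x) = 1"
    and q_init: "\<And>x0 i. qc 0 x0 i = (if i = x0 then 1 else 0)"
    and q_kolmogorov: "\<And>x0 i t. t \<in> {0..T} \<Longrightarrow>
          ((\<lambda>s. qc s x0 i) has_real_derivative (\<Sum>k\<in>UNIV. qc t x0 k * R t k i)) (at t within {0..T})"
    and q_pos: "\<And>t x0 i. t \<in> {0<..<T} \<Longrightarrow> qc t x0 i > 0"
    and cond_exit_pos: "\<And>t x0 i. t \<in> {0<..<T} \<Longrightarrow> cond_exit (R t) (qc t x0) i > 0"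
  shows "\<exists>C::real. \<forall>(lam :: real \<Rightarrow> 's \<Rightarrow> real) (rth :: real \<Rightarrow> 's \<Rightarrow> 's \<Rightarrow> real).
           (\<forall>t\<in>{0<..<T}. \<forall>i. lam t i > 0
               \<and> (\<forall>j. j \<noteq> i \<longrightarrow> rth t i j > 0) \<and> (\<Sum>j\<in>UNIV - {i}. rth t i j) = 1)
         \<and> set_integrable lborel {0<..<T} (loss_integrand R p qc lam rth)
         \<and> set_integrable lborel {0<..<T} (denoise_integrand R p qc lam rth)
         \<longrightarrow> unif_exp T (loss_integrand R p qc lam rth)
             = unif_exp T (denoise_integrand R p qc lam rth) + C"
proof -
  define g where "g t = ((let q = qmarg p (qc t) in (\<Sum>i\<in>UNIV. q i * (rev_exit (R t) q i * ln (rev_exit (R t) q i) - rev_exit (R t) q i)))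
       + (\<Sum>x0\<in>UNIV. p x0 * (\<Sum>i\<in>UNIV. qc t x0 i * cond_exit (R t) (qc t x0) i)))" for t
  show ?thesis
  proof (intro exI allI impI)
    fix lam :: "real \<Rightarrow> 's \<Rightarrow> real" and rth :: "real \<Rightarrow> 's \<Rightarrow> 's \<Rightarrow> real"
    assume H: "(\<forall>t\<in>{0<..<T}. \<forall>i. lam t i > 0
               \<and> (\<forall>j. j \<noteq> i \<longrightarrow> rth t i j > 0) \<and> (\<Sum>j\<in>UNIV - {i}. rth t i j) = 1)
         \<and> set_integrable lborel {0<..<T} (loss_integrand R p qc lam rth)
         \<and> set_integrable lborel {0<..<T} (denoise_integrand R p qc lam rth)"
    let ?L = "loss_integrand R p qc lam rth" and ?D = "denoise_integrand R p qc lam rth"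
    have pw: "?L t - ?D t = g t" if t: "t \<in> {0<..<T}" for t
    proof -
      have "?L t = ?D t + g t"
        unfolding loss_integrand_def denoise_integrand_def g_def
      proof (rule pointwise)
        show "\<And>i j. i \<noteq> j \<Longrightarrow> 0 \<le> R t i j" using rate[of t] unfolding rate_matrix_def by auto
      qed (use t H p_nonneg p_sum q_pos cond_exit_pos in auto)
      then show ?thesis by simp
    qed
    have "(LINT t:{0<..<T}|lborel. ?L t) = (LINT t:{0<..<T}|lborel. ?D t) + (LINT t:{0<..<T}|lborel. ?L t - ?D t)"
      using set_integral_diff(2)[of lborel "{0<..<T}" ?L ?D] H by simp
    also have "(LINT t:{0<..<T}|lborel. ?L t - ?D t) = (LINT t:{0<..<T}|lborel. g t)"
      by (rule set_lebesgue_integral_cong) (use pw in auto)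
    finally show "unif_exp T ?L = unif_exp T ?D + (LINT t:{0<..<T}|lborel. g t) / T"
      unfolding unif_exp_def by (simp add: add_divide_distrib)
  qed
qed

end
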